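(* For all $\vec z,\vec a\in\mathbb{C}^n$, \[ \log\!\Big(\frac{1}{|\langle \pi_{\vec z}|\pi_{\vec a}\rangle|^2}\Big)\;\le\; d_{\tan}(|\pi_{\vec z}\rangle,|\pi_{\vec a}\rangle)^2\;\le\;\frac{1}{|\langle \pi_{\vec z}|\pi_{\vec a}\rangle|^2}-1, \] with the conventions that $\log(1/0)=1/0=+\infty$ and that a summand of $d_{\tan}^2$ whose denominator vanishes equals $+\infty$.
   Context: For $\vec z\in\mathbb{C}^n$, $|\pi_{\vec z}\rangle=\bigotimes_{i=1}^n \frac{|0\rangle+z_i|1\rangle}{\sqrt{1+|z_i|^2}}$ is an $n$-qubit pure product state. The tangent distance is $d_{\tan}(|\pi_{\vec z}\rangle,|\pi_{\vec a}\rangle)=\Big(\sum_{i=1}^n\Big|\frac{z_i-a_i}{1+z_i^*a_i}\Big|^2\Big)^{1/2}$, where $z^*$ denotes complex conjugation. *)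

theory Defs
  imports "HOL-Analysis.Analysis" "HOL-Library.Extended_Real"
begin

text \<open>An n-qubit state is a vector in C^(2^n), indexed by bit strings
  b : {0..<n} -> bool (computational basis |b_0 ... b_{n-1}>).
  Vectors z in C^n are functions nat => complex, only indices i < n matter.\<close>

definition bitstrings :: "nat \<Rightarrow> (nat \<Rightarrow> bool) set" where
  "bitstrings n = ({0..<n} \<rightarrow>\<^sub>E (UNIV :: bool set))"

text \<open>Amplitudes of the product state |pi_z> = tensor_i (|0> + z_i |1>)/sqrt(1+|z_i|^2).\<close>
definition prod_state :: "nat \<Rightarrow> (nat \<Rightarrow> complex) \<Rightarrow> (nat \<Rightarrow> bool) \<Rightarrow> complex" where
  "prod_state n z b =
     (\<Prod>i<n. (if b i then z i else 1) / complex_of_real (sqrt (1 + (cmod (z i))\<^sup>2)))"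

definition braket :: "nat \<Rightarrow> ((nat \<Rightarrow> bool) \<Rightarrow> complex) \<Rightarrow> ((nat \<Rightarrow> bool) \<Rightarrow> complex) \<Rightarrow> complex" where
  "braket n psi phi = (\<Sum>b\<in>bitstrings n. cnj (psi b) * phi b)"

definition d_tan :: "nat \<Rightarrow> (nat \<Rightarrow> complex) \<Rightarrow> (nat \<Rightarrow> complex) \<Rightarrow> ereal" where
  "d_tan n z a =
     (if \<exists>i<n. 1 + cnj (z i) * a i = 0 then \<infinity>
      else ereal (sqrt (\<Sum>i<n. (cmod ((z i - a i) / (1 + cnj (z i) * a i)))\<^sup>2)))"

definition log_inv :: "real \<Rightarrow> ereal" where
  "log_inv x = (if x = 0 then \<infinity> else ereal (ln (1 / x)))"

definition inv_minus_one :: "real \<Rightarrow> ereal" where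
  "inv_minus_one x = (if x = 0 then \<infinity> else ereal (1 / x - 1))"

end

theory Submission
  imports Defs
begin

definition qf :: "(nat \<Rightarrow> complex) \<Rightarrow> (nat \<Rightarrow> complex) \<Rightarrow> nat \<Rightarrow> complex" where
  "qf z a i = (1 + cnj (z i) * a i) / complex_of_real (sqrt (1 + (cmod (z i))\<^sup>2) * sqrt (1 + (cmod (a i))\<^sup>2))"

lemma braket_prod: "braket n (prod_state n z) (prod_state n a) = (\<Prod>i<n. qf z a i)"
proof -
  define f where "f i y = cnj ((if y then z i else 1) / complex_of_real (sqrt (1 + (cmod (z i))\<^sup>2)))
      * ((if y then a i else 1) / complex_of_real (sqrt (1 + (cmod (a i))\<^sup>2)))" for i y
  have "braket n (prod_state n z) (prod_state n a) = (\<Sum>b\<in>PiE {..<n} (\<lambda>_. UNIV). \<Prod>i<n. f i (b i))"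
    unfolding braket_def prod_state_def bitstrings_def f_def atLeast0LessThan
    by (intro sum.cong refl) (simp add: cnj_prod prod.distrib[symmetric])
  also have "\<dots> = (\<Prod>i<n. \<Sum>y\<in>UNIV. f i y)"
    by (rule prod_sum_PiE[symmetric]) auto
  also have "\<dots> = (\<Prod>i<n. qf z a i)"
  proof (rule prod.cong[OF refl])
    fix i
    have p1: "sqrt (1 + (cmod (z i))\<^sup>2) > 0" "sqrt (1 + (cmod (a i))\<^sup>2) > 0"
      by (simp_all add: add_pos_nonneg)
    hence "complex_of_real (sqrt (1 + (cmod (z i))\<^sup>2)) \<noteq> 0" "complex_of_real (sqrt (1 + (cmod (a i))\<^sup>2)) \<noteq> 0"
      by auto
    thus "(\<Sum>y\<in>UNIV. f i y) = qf z a i"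
      unfolding f_def qf_def UNIV_bool by (simp add: field_simps)
  qed
  finally show ?thesis .
qed

lemma ident: "(1 + (cmod z)\<^sup>2) * (1 + (cmod a)\<^sup>2) = (cmod (1 + cnj z * a))\<^sup>2 + (cmod (z - a))\<^sup>2"
proof -
  have "complex_of_real ((1 + (cmod z)\<^sup>2) * (1 + (cmod a)\<^sup>2)) = complex_of_real ((cmod (1 + cnj z * a))\<^sup>2 + (cmod (z - a))\<^sup>2)"
    unfolding of_real_add of_real_mult of_real_1 complex_norm_square by (simp add: algebra_simps)
  thus ?thesis using of_real_eq_iff by blast
qed

lemma qf_norm: 
  assumes "1 + cnj (z i) * a i \<noteq> 0"
  shows "(cmod (qf z a i))\<^sup>2 = 1 / (1 + (cmod ((z i - a i) / (1 + cnj (z i) * a i)))\<^sup>2)"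
proof -
  have w: "cmod (1 + cnj (z i) * a i) > 0" using assms by simp
  have "(cmod (qf z a i))\<^sup>2 = (cmod (1 + cnj (z i) * a i))\<^sup>2 / ((1 + (cmod (z i))\<^sup>2) * (1 + (cmod (a i))\<^sup>2))"
    unfolding qf_def norm_divide power_divide norm_of_real power_mult_distrib abs_mult
    by (simp add: add_nonneg_nonneg)
  also have "\<dots> = 1 / (1 + (cmod ((z i - a i) / (1 + cnj (z i) * a i)))\<^sup>2)"
    unfolding ident using w by (simp add: norm_divide power_divide field_simps)
  finally show ?thesis .
qed

lemma qf_zero: "1 + cnj (z i) * a i = 0 \<Longrightarrow> qf z a i = 0"
  unfolding qf_def by simp

lemma prod_ge_sum: "(\<And>i. i < (n::nat) \<Longrightarrow> (t i::real) \<ge> 0) \<Longrightarrow> 1 + (\<Sum>i<n. t i) \<le> (\<Prod>i<n. 1 + t i)"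
proof (induction n)
  case 0 thus ?case by simp
next
  case (Suc n)
  have h: "1 + (\<Sum>i<n. t i) \<le> (\<Prod>i<n. 1 + t i)" using Suc by auto
  have t: "t n \<ge> 0" using Suc by auto
  have s: "0 \<le> (\<Sum>i<n. t i)" using Suc.prems by (intro sum_nonneg) auto
  have "1 + (\<Sum>i<Suc n. t i) \<le> (1 + (\<Sum>i<n. t i)) * (1 + t n)"
    using t s by (simp add: algebra_simps)
  also have "\<dots> \<le> (\<Prod>i<n. 1 + t i) * (1 + t n)"
    using h t by (simp add: mult_right_mono)
  finally show ?case by simp
qed

theorem lemma3p5:
  fixes n :: nat and z a :: "nat \<Rightarrow> complex"
  shows "log_inv ((cmod (braket n (prod_state n z) (prod_state n a)))\<^sup>2) \<le> (d_tan n z a)\<^sup>2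
       \<and> (d_tan n z a)\<^sup>2 \<le> inv_minus_one ((cmod (braket n (prod_state n z) (prod_state n a)))\<^sup>2)"
proof (cases "\<exists>i<n. 1 + cnj (z i) * a i = 0")
  case True
  then obtain i where i: "i < n" "1 + cnj (z i) * a i = 0" by blast
  have "braket n (prod_state n z) (prod_state n a) = 0"
    unfolding braket_prod using i qf_zero[where z=z and a=a and i=i] by (auto intro: prod_zero)
  moreover have "d_tan n z a = \<infinity>" unfolding d_tan_def using True by simp
  ultimately show ?thesis by (simp add: log_inv_def inv_minus_one_def power2_eq_square)
next
  case False
  define t where "t i = (cmod ((z i - a i) / (1 + cnj (z i) * a i)))\<^sup>2" for i
  have t0: "\<And>i. t i \<ge> 0" unfolding t_def by simp
  have P: "(cmod (braket n (prod_state n z) (prod_state n a)))\<^sup>2 = (\<Prod>i<n. 1 / (1 + t i))"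
    unfolding braket_prod prod_norm[symmetric] prod_power_distrib t_def
    using False qf_norm by (intro prod.cong) auto
  have pos: "(\<Prod>i<n. 1 + t i) > 0" using t0 by (intro prod_pos) (auto simp: add_pos_nonneg)
  have Pinv: "1 / (\<Prod>i<n. 1 / (1 + t i)) = (\<Prod>i<n. 1 + t i)"
    by (simp add: prod_dividef)
  have Pne: "(\<Prod>i<n. 1 / (1 + t i)) \<noteq> 0" using Pinv pos by (metis div_by_0 less_irrefl)
  have S0: "0 \<le> (\<Sum>i<n. t i)" using t0 by (simp add: sum_nonneg)
  have D: "(d_tan n z a)\<^sup>2 = ereal (\<Sum>i<n. t i)"
    unfolding d_tan_def t_def using False S0 by (simp add: power2_eq_square[symmetric] t_def[symmetric])
  have L: "ln (\<Prod>i<n. 1 + t i) = (\<Sum>i<n. ln (1 + t i))"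
    using t0 by (intro ln_prod) (simp, smt (verit))
  have L2: "(\<Sum>i<n. ln (1 + t i)) \<le> (\<Sum>i<n. t i)"
    using t0 by (intro sum_mono ln_add_one_self_le_self) auto
  have R: "(\<Sum>i<n. t i) \<le> (\<Prod>i<n. 1 + t i) - 1" using prod_ge_sum[of n t] t0 by auto
  show ?thesis
    unfolding P D log_inv_def inv_minus_one_def using Pne Pinv L L2 R by simp
qed

end
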